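(* On a probability space, let $\mathbb{F}=(\mathcal{F}_t)_{t\ge0}$ and $\mathbb{G}=(\mathcal{G}_t)_{t\ge0}$ be filtrations and $\mathcal{H}$ a $\sigma$-field. Suppose there is a dense set $\mathbb{T}\subset[0,\infty)$ such that $\mathcal{F}_t$ is conditionally independent of $\mathcal{H}$ given $\mathcal{G}_t$ for every $t\in\mathbb{T}$. Then $\mathcal{F}_{t+}$ is conditionally independent of $\mathcal{H}$ given $\mathcal{G}_{t+}$ for every $t\ge0$.
   Context: For a filtration $\mathbb{F}$, $\mathcal{F}_{t+}=\bigcap_{s>t}\mathcal{F}_s$. *)

theory Defs
  imports "HOL-Probability.Probability"
begin

definition filtration_on :: "'a measure \<Rightarrow> (real \<Rightarrow> 'a measure) \<Rightarrow> bool" where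
  "filtration_on M F \<longleftrightarrow> (\<forall>t\<ge>0. subalgebra M (F t)) \<and>
     (\<forall>s t. 0 \<le> s \<longrightarrow> s \<le> t \<longrightarrow> sets (F s) \<subseteq> sets (F t))"

definition right_lim :: "'a measure \<Rightarrow> (real \<Rightarrow> 'a measure) \<Rightarrow> real \<Rightarrow> 'a measure" where
  "right_lim M F t = sigma (space M) (\<Inter>s\<in>{t<..}. sets (F s))"

definition cond_indep :: "'a measure \<Rightarrow> 'a measure \<Rightarrow> 'a measure \<Rightarrow> 'a measure \<Rightarrow> bool" where
  "cond_indep M F H G \<longleftrightarrow> (\<forall>A\<in>sets F. \<forall>B\<in>sets H.
     AE x in M. real_cond_exp M G (indicator (A \<inter> B)) x
        = real_cond_exp M G (indicator A) x * real_cond_exp M G (indicator B) x)"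

end

theory Submission
  imports Defs
begin

lemma sfs_prob: "prob_space M \<Longrightarrow> subalgebra M F \<Longrightarrow> sigma_finite_subalgebra M F"
  by (intro finite_measure_subalgebra_is_sigma_finite)
     (simp add: finite_measure_subalgebra_def finite_measure_subalgebra_axioms_def prob_space.finite_measure)

lemma ae_subseq_conv:
  fixes M :: "'a measure" and Gn :: "nat \<Rightarrow> 'a measure" and Ginf :: "'a measure" and X :: "'a \<Rightarrow> real"
  assumes P: "prob_space M"
    and sub: "\<And>n. subalgebra M (Gn n)"
    and mono: "\<And>n m. n \<le> m \<Longrightarrow> sets (Gn m) \<subseteq> sets (Gn n)"
    and subinf: "subalgebra M Ginf"
    and setsinf: "sets Ginf = (\<Inter>n. sets (Gn n))"
    and Xm: "X \<in> borel_measurable M" and Xb: "\<And>x. x \<in> space M \<Longrightarrow> 0 \<le> X x \<and> X x \<le> 1"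
  shows "\<exists>r. strict_mono r \<and> (AE x in M. (\<lambda>k. real_cond_exp M (Gn (r k)) X x) \<longlonglongrightarrow> real_cond_exp M Ginf X x)"
proof -
  interpret prob_space M by (rule P)
  define Z where "Z n = real_cond_exp M (Gn n) X" for n
  have sfs: "sigma_finite_subalgebra M (Gn n)" for n using sfs_prob[OF P sub] .
  have Xi: "integrable M X"
    by (rule integrable_const_bound[where B=1]) (use Xb Xm in auto)
  have Zm: "Z n \<in> borel_measurable (Gn n)" for n unfolding Z_def by simp
  have ZmM: "Z n \<in> borel_measurable M" for n unfolding Z_def by simp
  have Zb1: "AE x in M. 0 \<le> Z n x \<and> Z n x \<le> 1" for n
  proof -
    have "AE x in M. 0 \<le> Z n x" unfolding Z_def
      by (rule sigma_finite_subalgebra.real_cond_exp_ge_c[OF sfs Xi]) (use Xb in auto)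
    moreover have "AE x in M. Z n x \<le> 1" unfolding Z_def
      by (rule sigma_finite_subalgebra.real_cond_exp_le_c[OF sfs Xi]) (use Xb in auto)
    ultimately show ?thesis by eventually_elim auto
  qed
  have Zb: "AE x in M. \<forall>n. 0 \<le> Z n x \<and> Z n x \<le> 1"
    using Zb1 by (simp add: AE_all_countable)
  have subnm: "subalgebra (Gn n) (Gn m)" if "n \<le> m" for n m
    using mono[OF that] sub[of n] sub[of m] by (simp add: subalgebra_def)
  have Zmn: "Z m \<in> borel_measurable (Gn n)" if "n \<le> m" for n m
    using measurable_from_subalg[OF subnm[OF that] Zm] .
  have prodi: "integrable M (\<lambda>x. Z m x * Z n x)" for m n
    by (rule integrable_const_bound[where B=1]) (use Zb ZmM in \<open>auto elim!: eventually_mono intro!: mult_le_one\<close>)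
  have prodXi: "integrable M (\<lambda>x. Z m x * X x)" for m
  proof (rule integrable_const_bound[where B=1])
    show "AE x in M. norm (Z m x * X x) \<le> 1" using Zb AE_space
      by eventually_elim (use Xb in \<open>auto simp: abs_mult intro!: mult_le_one\<close>)
  qed (use ZmM Xm in simp)
  have orth: "(\<integral>x. Z m x * Z n x \<partial>M) = (\<integral>x. Z m x * Z m x \<partial>M)" if "n \<le> m" for n m
  proof -
    have "(\<integral>x. Z m x * Z n x \<partial>M) = (\<integral>x. Z m x * X x \<partial>M)"
      unfolding Z_def[of n] by (rule sigma_finite_subalgebra.real_cond_exp_intg(2)[OF sfs prodXi Zmn[OF that] Xm])
    also have "\<dots> = (\<integral>x. Z m x * Z m x \<partial>M)"
      using sigma_finite_subalgebra.real_cond_exp_intg(2)[OF sfs prodXi Zm Xm, of m] by (simp add: Z_def)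
    finally show ?thesis .
  qed
  have Zi: "integrable M (Z n)" for n
    unfolding Z_def by (rule sigma_finite_subalgebra.real_cond_exp_int(1)[OF sfs Xi])
  define d where "d n = (\<integral>x. Z n x * Z n x \<partial>M)" for n
  have sqi: "integrable M (\<lambda>x. (Z n x - Z m x)^2)" for n m
  proof (rule integrable_const_bound[where B=1])
    show "AE x in M. norm ((Z n x - Z m x)^2) \<le> 1" using Zb
    proof eventually_elim
      case (elim x)
      then have "\<bar>Z n x - Z m x\<bar> \<le> 1" by (smt (verit))
      then show ?case by (simp add: abs_square_le_1)
    qed
  qed (use ZmM in simp)
  have diff: "(\<integral>x. (Z n x - Z m x)^2 \<partial>M) = d n - d m" if "n \<le> m" for n m
  proof -
    have "(\<lambda>x. (Z n x - Z m x)^2) = (\<lambda>x. (Z n x * Z n x - 2 * (Z m x * Z n x)) + Z m x * Z m x)"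
      by (auto simp: power2_eq_square algebra_simps)
    then have "(\<integral>x. (Z n x - Z m x)^2 \<partial>M) = d n - 2 * (\<integral>x. Z m x * Z n x \<partial>M) + d m"
      unfolding d_def using prodi by simp
    then show ?thesis using orth[OF that] unfolding d_def by simp
  qed
  have dmono: "d m \<le> d n" if "n \<le> m" for n m
  proof -
    have "0 \<le> (\<integral>x. (Z n x - Z m x)^2 \<partial>M)" by (rule integral_nonneg_AE) simp
    then show ?thesis using diff[OF that] by simp
  qed
  have dnn: "0 \<le> d n" for n unfolding d_def by (rule integral_nonneg_AE) simp
  define L where "L = Inf (range d)"
  have bdd: "bdd_below (range d)" using dnn by (auto intro!: bdd_belowI)
  have dL: "L \<le> d n" for n unfolding L_def using bdd by (simp add: cInf_lower)
  have "\<exists>N. d N < L + (1/4)^k" for k::nat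
  proof -
    have "Inf (range d) < L + (1/4)^k" unfolding L_def by simp
    then obtain y where "y \<in> range d" "y < L + (1/4)^k" using cInf_lessD[of "range d"] by blast
    then show ?thesis by auto
  qed
  then obtain N where N: "\<And>k. d (N k) < L + (1/4)^k" by metis
  define r where "r k = (\<Sum>i\<le>k. N i) + k" for k
  have rmono: "strict_mono r" unfolding strict_mono_Suc_iff r_def by simp
  have rN: "N k \<le> r k" for k
  proof -
    have "N k \<le> (\<Sum>i\<le>k. N i)" by (rule member_le_sum) auto
    then show ?thesis unfolding r_def by simp
  qed
  have sq: "(\<integral>x. (Z (r (Suc k)) x - Z (r k) x)^2 \<partial>M) < (1/4)^k" for k
  proof -
    have "(\<lambda>x. (Z (r (Suc k)) x - Z (r k) x)^2) = (\<lambda>x. (Z (r k) x - Z (r (Suc k)) x)^2)"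
      by (auto simp: power2_commute)
    then have "(\<integral>x. (Z (r (Suc k)) x - Z (r k) x)^2 \<partial>M) = d (r k) - d (r (Suc k))"
      using diff[of "r k" "r (Suc k)"] rmono by (simp add: strict_mono_less_eq)
    also have "\<dots> \<le> d (N k) - L" using dmono[OF rN[of k]] dL[of "r (Suc k)"] by simp
    also have "\<dots> < (1/4)^k" using N[of k] by simp
    finally show ?thesis .
  qed
  define D where "D k x = \<bar>Z (r (Suc k)) x - Z (r k) x\<bar>" for k x
  have Di: "integrable M (D k)" for k unfolding D_def using Zi by simp
  have DM: "D k \<in> borel_measurable M" for k unfolding D_def using ZmM by simp
  have Dint: "(\<integral>x. D k x \<partial>M) \<le> (1/2)^k" for k
  proof -
    define a :: real where "a = (1/2)^k"
    have a0: "0 < a" unfolding a_def by simp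
    have a2: "a^2 = (1/4)^k" unfolding a_def by (simp add: power_mult_distrib[symmetric] power2_eq_square power_mult[symmetric] mult.commute flip: power_mult_distrib)
    have pw: "2 * a * D k x \<le> a^2 + (Z (r (Suc k)) x - Z (r k) x)^2" for x
    proof -
      have "0 \<le> (D k x - a)^2" by simp
      moreover have "(D k x)^2 = (Z (r (Suc k)) x - Z (r k) x)^2" unfolding D_def by simp
      moreover have "(D k x - a)^2 = (D k x)^2 - 2*a*D k x + a^2" by (simp add: power2_diff algebra_simps)
      ultimately show ?thesis by linarith
    qed
    have "(\<integral>x. 2 * a * D k x \<partial>M) \<le> (\<integral>x. a^2 + (Z (r (Suc k)) x - Z (r k) x)^2 \<partial>M)"
      by (rule integral_mono) (use pw Di sqi in auto)
    also have "\<dots> = a^2 + (\<integral>x. (Z (r (Suc k)) x - Z (r k) x)^2 \<partial>M)"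
      using sqi by (simp add: prob_space)
    also have "\<dots> < a^2 + a^2" using sq[of k] a2 by simp
    finally have "2 * a * (\<integral>x. D k x \<partial>M) < 2 * a * a" by (simp add: power2_eq_square)
    then show ?thesis using a0 unfolding a_def by simp
  qed
  have "(\<integral>\<^sup>+x. (\<Sum>k. ennreal (D k x)) \<partial>M) = (\<Sum>k. \<integral>\<^sup>+x. ennreal (D k x) \<partial>M)"
    by (rule nn_integral_suminf) (use DM in simp)
  also have "\<dots> = (\<Sum>k. ennreal (\<integral>x. D k x \<partial>M))"
    by (rule suminf_cong, rule nn_integral_eq_integral) (use Di in \<open>auto simp: D_def[abs_def]\<close>)
  also have "\<dots> \<le> (\<Sum>k. ennreal ((1/2)^k))"
    by (rule suminf_le) (use Dint in \<open>auto intro: ennreal_leI\<close>)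
  also have "\<dots> = ennreal (\<Sum>k. (1/2)^k)"
    by (rule suminf_ennreal2) auto
  also have "\<dots> < \<infinity>" by simp
  finally have fin: "(\<integral>\<^sup>+x. (\<Sum>k. ennreal (D k x)) \<partial>M) \<noteq> \<infinity>" by simp
  have "AE x in M. (\<Sum>k. ennreal (D k x)) \<noteq> \<infinity>"
    by (rule nn_integral_PInf_AE[OF _ fin]) (use DM in simp)
  then have conv: "AE x in M. convergent (\<lambda>k. Z (r k) x)"
  proof eventually_elim
    case (elim x)
    then have "summable (\<lambda>k. D k x)" by (intro summable_suminf_not_top) (auto simp: D_def)
    then have "summable (\<lambda>k. Z (r (Suc k)) x - Z (r k) x)"
      unfolding D_def by (rule summable_rabs_cancel)
    then have "(\<lambda>n. \<Sum>k<n. Z (r (Suc k)) x - Z (r k) x) \<longlonglongrightarrow> (\<Sum>k. Z (r (Suc k)) x - Z (r k) x)"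
      by (rule summable_LIMSEQ)
    then have "(\<lambda>n. Z (r n) x - Z (r 0) x) \<longlonglongrightarrow> (\<Sum>k. Z (r (Suc k)) x - Z (r k) x)"
      using sum_lessThan_telescope[of "\<lambda>k. Z (r k) x"] by simp
    then have "(\<lambda>n. (Z (r n) x - Z (r 0) x) + Z (r 0) x) \<longlonglongrightarrow> (\<Sum>k. Z (r (Suc k)) x - Z (r k) x) + Z (r 0) x"
      by (intro tendsto_add) auto
    then show ?case unfolding convergent_def by auto
  qed
  define W where "W x = real_of_ereal (limsup (\<lambda>k. ereal (Z (r k) x)))" for x
  have Wlim: "AE x in M. (\<lambda>k. Z (r k) x) \<longlonglongrightarrow> W x" using conv
  proof eventually_elim
    case (elim x)
    then obtain c where c: "(\<lambda>k. Z (r k) x) \<longlonglongrightarrow> c" unfolding convergent_def by auto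
    then have "limsup (\<lambda>k. ereal (Z (r k) x)) = ereal c"
      by (intro lim_imp_Limsup) (auto intro: tendsto_ereal)
    then show ?case using c unfolding W_def by simp
  qed
  have spG: "space (Gn n) = space M" for n using sub[of n] by (simp add: subalgebra_def)
  have WK: "W \<in> borel_measurable (Gn K)" for K
  proof -
    have eq: "W = (\<lambda>x. real_of_ereal (limsup (\<lambda>k. ereal (Z (r (k + K)) x))))"
      unfolding W_def using limsup_shift_k[of "\<lambda>k. ereal (Z (r k) _)" K] by simp
    have "K \<le> r (k + K)" for k
      using seq_suble[OF rmono, of "k + K"] by simp
    then have [measurable]: "(\<lambda>x. Z (r (k + K)) x) \<in> borel_measurable (Gn K)" for k
      using Zmn by simp
    show ?thesis unfolding eq by measurable
  qed
  have WG: "W \<in> borel_measurable Ginf"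
  proof -
    have spI: "space Ginf = space M" using subinf by (simp add: subalgebra_def)
    show ?thesis unfolding measurable_def
    proof (intro CollectI conjI ballI)
      show "W \<in> space Ginf \<rightarrow> space borel" by simp
      fix S :: "real set" assume "S \<in> sets borel"
      then have "W -` S \<inter> space (Gn n) \<in> sets (Gn n)" for n using WK[of n] by (simp add: measurable_sets)
      then show "W -` S \<inter> space Ginf \<in> sets Ginf" unfolding setsinf spI using spG by simp
    qed
  qed
  have WM: "W \<in> borel_measurable M" using measurable_from_subalg[OF subinf WG] .
  have sfsI: "sigma_finite_subalgebra M Ginf" using sfs_prob[OF P subinf] .
  have Zbn: "AE x in M. norm (Z (r k) x) \<le> 1" for k using Zb by eventually_elim auto
  have WI: "integrable M W"
    by (rule integrable_dominated_convergence[where s="\<lambda>k. Z (r k)" and w="\<lambda>_. 1"])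
       (use WM ZmM Wlim Zbn in auto)
  have Yeq: "AE x in M. real_cond_exp M Ginf X x = W x"
  proof (rule sigma_finite_subalgebra.real_cond_exp_charact[OF sfsI _ Xi WI WG])
    fix A assume A: "A \<in> sets Ginf"
    then have An: "A \<in> sets (Gn n)" for n using setsinf by auto
    have AM: "A \<in> sets M" using An[of 0] sub[of 0] by (auto simp: subalgebra_def)
    have c: "(\<integral>x\<in>A. X x \<partial>M) = (\<integral>x\<in>A. Z n x \<partial>M)" for n
      unfolding Z_def by (rule sigma_finite_subalgebra.real_cond_exp_intA[OF sfs Xi An])
    have "(\<lambda>k. \<integral>x. indicator A x * Z (r k) x \<partial>M) \<longlonglongrightarrow> (\<integral>x. indicator A x * W x \<partial>M)"
    proof (rule integral_dominated_convergence[where w="\<lambda>_. 1"])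
      show "AE x in M. (\<lambda>k. indicator A x * Z (r k) x) \<longlonglongrightarrow> indicator A x * W x"
        using Wlim by eventually_elim (auto intro: tendsto_mult)
      show "AE x in M. norm (indicator A x * Z (r k) x) \<le> 1" for k
        using Zbn[of k] by eventually_elim (auto simp: indicator_def)
    qed (use AM WM ZmM in auto)
    then have "(\<lambda>k. \<integral>x\<in>A. Z (r k) x \<partial>M) \<longlonglongrightarrow> (\<integral>x\<in>A. W x \<partial>M)"
      by (simp add: set_lebesgue_integral_def)
    then have "(\<lambda>k. \<integral>x\<in>A. X x \<partial>M) \<longlonglongrightarrow> (\<integral>x\<in>A. W x \<partial>M)"
      by (simp add: c[symmetric])
    then show "(\<integral>x\<in>A. X x \<partial>M) = (\<integral>x\<in>A. W x \<partial>M)"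
      using LIMSEQ_const_iff by blast
  qed
  have "AE x in M. (\<lambda>k. real_cond_exp M (Gn (r k)) X x) \<longlonglongrightarrow> real_cond_exp M Ginf X x"
    using Wlim Yeq by eventually_elim (simp add: Z_def)
  then show ?thesis using rmono by blast
qed

lemma right_lim_props:
  assumes G: "filtration_on M G" and t: "0 \<le> t"
  shows "sets (right_lim M G t) = (\<Inter>u\<in>{t<..}. sets (G u))"
    and "subalgebra M (right_lim M G t)"
proof -
  define A where "A = (\<Inter>u\<in>{t<..}. sets (G u))"
  have subG: "subalgebra M (G u)" if "t < u" for u using G that t unfolding filtration_on_def by auto
  have AsM: "A \<subseteq> sets M" unfolding A_def using subG[of "t+1"] by (auto simp: subalgebra_def)
  then have AP: "A \<subseteq> Pow (space M)" using sets.sets_into_space by auto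
  have "sigma_sets (space M) A = A"
  proof
    show "A \<subseteq> sigma_sets (space M) A" by (rule sigma_sets_superset_generator)
    show "sigma_sets (space M) A \<subseteq> A" unfolding A_def
    proof (intro INT_greatest)
      fix u assume "u \<in> {t<..}"
      then have su: "subalgebra M (G u)" using subG by auto
      have "sigma_sets (space (G u)) A \<subseteq> sets (G u)"
        by (rule sets.sigma_sets_subset) (use \<open>u \<in> {t<..}\<close> in \<open>auto simp: A_def\<close>)
      then show "sigma_sets (space M) (\<Inter>u\<in>{t<..}. sets (G u)) \<subseteq> sets (G u)"
        using su by (simp add: subalgebra_def A_def)
    qed
  qed
  then show S: "sets (right_lim M G t) = (\<Inter>u\<in>{t<..}. sets (G u))"
    unfolding right_lim_def using AP by (simp add: A_def[symmetric] sets_measure_of)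
  show "subalgebra M (right_lim M G t)"
    unfolding subalgebra_def using S AsM AP by (simp add: right_lim_def A_def[symmetric] space_measure_of_conv)
qed

theorem lemma3p7:
  fixes M :: "'a measure" and F G :: "real \<Rightarrow> 'a measure" and H :: "'a measure"
    and T :: "real set"
  assumes "prob_space M"
    and "filtration_on M F" and "filtration_on M G"
    and "subalgebra M H"
    and "T \<subseteq> {0..}" and "closure T = {0..}"
    and "\<And>t. t \<in> T \<Longrightarrow> cond_indep M (F t) H (G t)"
  shows "\<forall>t\<ge>0. cond_indep M (right_lim M F t) H (right_lim M G t)"
proof (intro allI impI)
  fix t :: real assume t: "0 \<le> t"
  have exT: "\<exists>x. x \<in> T \<and> t < x \<and> x < a" if ta: "t < a" for a
  proof -
    have "(t + a) / 2 \<in> closure T" using assms(6) t that by simp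
    then obtain y where "y \<in> T" "dist y ((t + a) / 2) < (a - t) / 2"
    proof -
      have "0 < (a - t) / 2" using ta by simp
      then show ?thesis using that closure_approachable[of "(t + a) / 2" T] \<open>(t + a) / 2 \<in> closure T\<close> by blast
    qed
    moreover from this(2) have "\<bar>y - (t + a) / 2\<bar> < (a - t) / 2" by (simp add: dist_real_def)
    then have "t < y \<and> y < a" unfolding abs_less_iff by (auto simp: field_simps)
    ultimately show ?thesis by blast
  qed
  define s where "s = rec_nat (SOME x. x \<in> T \<and> t < x \<and> x < t + 1)
     (\<lambda>n p. SOME x. x \<in> T \<and> t < x \<and> x < min p (t + 1 / (real (Suc n) + 1)))"
  have s_props: "s n \<in> T \<and> t < s n \<and> s n < t + 1 / (real n + 1)" for n
  proof (induction n)
    case 0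
    have "\<exists>x. x \<in> T \<and> t < x \<and> x < t + 1" using exT by simp
    from someI_ex[OF this] show ?case unfolding s_def by simp
  next
    case (Suc n)
    have "\<exists>x. x \<in> T \<and> t < x \<and> x < min (s n) (t + 1 / (real (Suc n) + 1))"
      using exT[of "min (s n) (t + 1 / (real (Suc n) + 1))"] Suc by simp
    from someI_ex[OF this] show ?case unfolding s_def by simp
  qed
  have s_dec: "s (Suc n) < s n" for n
  proof -
    have "\<exists>x. x \<in> T \<and> t < x \<and> x < min (s n) (t + 1 / (real (Suc n) + 1))"
      using exT[of "min (s n) (t + 1 / (real (Suc n) + 1))"] s_props[of n] by simp
    from someI_ex[OF this] show ?thesis unfolding s_def by simp
  qed
  have s_anti: "s m \<le> s n" if "n \<le> m" for n m
    using that
  proof (induction rule: dec_induct)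
    case (step m)
    then show ?case using s_dec[of m] by linarith
  qed simp
  note P = assms(1)
  have s0: "0 \<le> s n" for n using s_props[of n] t by simp
  have subG: "subalgebra M (G u)" if "0 \<le> u" for u using assms(3) that unfolding filtration_on_def by auto
  have monoG: "sets (G u) \<subseteq> sets (G v)" if "0 \<le> u" "u \<le> v" for u v
    using assms(3) that unfolding filtration_on_def by auto
  have monoF: "sets (F u) \<subseteq> sets (F v)" if "0 \<le> u" "u \<le> v" for u v
    using assms(2) that unfolding filtration_on_def by auto
  have subF: "subalgebra M (F u)" if "0 \<le> u" for u using assms(2) that unfolding filtration_on_def by auto
  have key: "\<exists>r. strict_mono r \<and> (AE x in M. (\<lambda>k. real_cond_exp M (G (s (q (r k)))) X x) \<longlonglongrightarrow> real_cond_exp M (right_lim M G t) X x)"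
    if q: "strict_mono (q :: nat \<Rightarrow> nat)" and Xm: "X \<in> borel_measurable M" and Xb: "\<And>x. x \<in> space M \<Longrightarrow> 0 \<le> X x \<and> X x \<le> 1" for q X
  proof (rule ae_subseq_conv[where Gn="\<lambda>n. G (s (q n))", OF P _ _ _ _ Xm Xb])
    show "subalgebra M (G (s (q n)))" for n using subG s0 by simp
    show "sets (G (s (q m))) \<subseteq> sets (G (s (q n)))" if "n \<le> m" for n m
      using monoG[OF s0 s_anti] q that by (simp add: strict_mono_less_eq)
    show "subalgebra M (right_lim M G t)" using right_lim_props(2)[OF assms(3) t] .
    show "sets (right_lim M G t) = (\<Inter>n. sets (G (s (q n))))"
      unfolding right_lim_props(1)[OF assms(3) t]
    proof
      show "(\<Inter>u\<in>{t<..}. sets (G u)) \<subseteq> (\<Inter>n. sets (G (s (q n))))"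
      proof (intro INT_greatest)
        fix n show "(\<Inter>u\<in>{t<..}. sets (G u)) \<subseteq> sets (G (s (q n)))"
          using s_props[of "q n"] by (intro INT_lower) simp
      qed
      show "(\<Inter>n. sets (G (s (q n)))) \<subseteq> (\<Inter>u\<in>{t<..}. sets (G u))"
      proof (intro INT_greatest subsetI)
        fix u S assume u: "u \<in> {t<..}" and S: "S \<in> (\<Inter>n. sets (G (s (q n))))"
        obtain n :: nat where n: "1 / (real n + 1) < u - t"
        proof -
          have "0 < u - t" using u by simp
          from reals_Archimedean[OF this] obtain n where "inverse (real (Suc n)) < u - t" by blast
          then show ?thesis using that[of n] by (simp add: inverse_eq_divide add.commute)
        qed
        have "s (q n) \<le> s n" by (rule s_anti[OF seq_suble[OF q]])
        then have "s (q n) \<le> u" using s_props[of n] n by simp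
        moreover have "S \<in> sets (G (s (q n)))" using S by blast
        ultimately show "S \<in> sets (G u)" using monoG[OF s0] by blast
      qed
    qed
  qed
  show "cond_indep M (right_lim M F t) H (right_lim M G t)"
    unfolding cond_indep_def
  proof (intro ballI)
    fix A B assume A: "A \<in> sets (right_lim M F t)" and B: "B \<in> sets H"
    have An: "A \<in> sets (F (s n))" for n
    proof -
      have "(\<Inter>u\<in>{t<..}. sets (F u)) \<subseteq> sets (F (s n))"
        using s_props[of n] by (intro INT_lower) simp
      then show ?thesis using A unfolding right_lim_props(1)[OF assms(2) t] by blast
    qed
    have AM: "A \<in> sets M" using An[of 0] subF[OF s0] by (auto simp: subalgebra_def)
    have BM: "B \<in> sets M" using B assms(4) by (auto simp: subalgebra_def)
    let ?Y = "real_cond_exp M (right_lim M G t)"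
    let ?E = "\<lambda>k. real_cond_exp M (G (s k))"
    obtain r1 where r1: "strict_mono r1"
      "AE x in M. (\<lambda>k. ?E (r1 k) (indicator (A \<inter> B)) x) \<longlonglongrightarrow> ?Y (indicator (A \<inter> B)) x"
      using key[of "\<lambda>n. n" "indicator (A \<inter> B)"] AM BM by (auto simp: strict_mono_def)
    obtain r2 where r2: "strict_mono r2"
      "AE x in M. (\<lambda>k. ?E (r1 (r2 k)) (indicator A) x) \<longlonglongrightarrow> ?Y (indicator A) x"
      using key[OF r1(1), of "indicator A"] AM by auto
    obtain r3 where r3: "strict_mono r3"
      "AE x in M. (\<lambda>k. ?E (r1 (r2 (r3 k))) (indicator B) x) \<longlonglongrightarrow> ?Y (indicator B) x"
      using key[OF strict_mono_o[OF r1(1) r2(1)], of "indicator B"] BM by auto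
    have r23: "strict_mono (r2 \<circ> r3)" using strict_mono_o[OF r2(1) r3(1)] .
    have ci: "AE x in M. \<forall>k. ?E k (indicator (A \<inter> B)) x = ?E k (indicator A) x * ?E k (indicator B) x"
      unfolding AE_all_countable
    proof
      fix k
      show "AE x in M. ?E k (indicator (A \<inter> B)) x = ?E k (indicator A) x * ?E k (indicator B) x"
      proof -
        have "cond_indep M (F (s k)) H (G (s k))" by (rule assms(7)) (use s_props[of k] in simp)
        then show ?thesis using An[of k] B unfolding cond_indep_def by blast
      qed
    qed
    show "AE x in M. ?Y (indicator (A \<inter> B)) x = ?Y (indicator A) x * ?Y (indicator B) x"
      using r1(2) r2(2) r3(2) ci
    proof eventually_elim
      case (elim x)
      have l1: "(\<lambda>k. ?E (r1 (r2 (r3 k))) (indicator (A \<inter> B)) x) \<longlonglongrightarrow> ?Y (indicator (A \<inter> B)) x"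
        using LIMSEQ_subseq_LIMSEQ[OF elim(1) r23] by (simp add: o_def)
      have l2: "(\<lambda>k. ?E (r1 (r2 (r3 k))) (indicator A) x) \<longlonglongrightarrow> ?Y (indicator A) x"
        using LIMSEQ_subseq_LIMSEQ[OF elim(2) r3(1)] by (simp add: o_def)
      have "(\<lambda>k. ?E (r1 (r2 (r3 k))) (indicator A) x * ?E (r1 (r2 (r3 k))) (indicator B) x)
          \<longlonglongrightarrow> ?Y (indicator A) x * ?Y (indicator B) x"
        using l2 elim(3) by (rule tendsto_mult)
      then have "(\<lambda>k. ?E (r1 (r2 (r3 k))) (indicator (A \<inter> B)) x)
          \<longlonglongrightarrow> ?Y (indicator A) x * ?Y (indicator B) x"
        using elim(4) by simp
      then show ?case using l1 LIMSEQ_unique by blast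
    qed
  qed
qed

end
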